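(* Let $\epsilon>0$, $\mathbf C\in\mathbb R^{n\times n}$, $\mathbf b_1,\dots,\mathbf b_N\in\Sigma_n$, weights $\lambda\in\Sigma_N$ with $\lambda_k>0$ for all $k$, $A:\mathbb R^n\to\mathbb R^p$ linear with adjoint $A^*$, and $J:\mathbb R^p\to\mathbb R$ convex (finite-valued) with convex conjugate $J^*$. Consider the primal problem $$(\mathcal P)\qquad \min_{\mathbf a\in\Sigma_n}\sum_{k=1}^N\lambda_kF_{\mathbf b_k}(\mathbf a)+J(A\mathbf a)$$ and the dual problem $$(\mathcal D)\qquad \inf_{\mathbf f_1,\dots,\mathbf f_N\in\mathbb R^n,\ \mathbf g\in\mathbb R^p}\sum_{k=1}^N\lambda_kF^*_{\mathbf b_k}(\mathbf f_k)+J^*(\mathbf g)\quad\text{s.t.}\quad A^*\mathbf g+\sum_{k=1}^N\lambda_k\mathbf f_k=0.$$ Then $\min(\mathcal P)=-\inf(\mathcal D)$, and if $((\mathbf f_k)_{k=1}^N,\mathbf g)$ is a minimizer of $(\mathcal D)$, then the vectors $\nabla F^*_{\mathbf b_k}(\mathbf f_k)$, $k=1,\dots,N$, are all equal to a common vector $\mathbf a$, and this $\mathbf a$ is a solution of $(\mathcal P)$.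
   Context: $\Sigma_n=\{\mathbf a\in\mathbb R^n_+:\sum_i\mathbf a_i=1\}$; $U(\mathbf a,\mathbf b)=\{\mathbf P\in\mathbb R_+^{n\times n}:\mathbf P\mathbf 1_n=\mathbf a,\ \mathbf P^\top\mathbf 1_n=\mathbf b\}$; $\mathbf H(\mathbf P)=-\sum_{i,j}\mathbf P_{i,j}(\log\mathbf P_{i,j}-1)$ with $0\log0=0$; $W^\epsilon_{\mathbf C}(\mathbf a,\mathbf b)=\min_{\mathbf P\in U(\mathbf a,\mathbf b)}\sum_{i,j}\mathbf P_{i,j}\mathbf C_{i,j}-\epsilon\mathbf H(\mathbf P)$. For $\mathbf b\in\Sigma_n$, $F_{\mathbf b}(\mathbf a)=W^\epsilon_{\mathbf C}(\mathbf a,\mathbf b)$ for $\mathbf a\in\Sigma_n$, and $F^*_{\mathbf b}(\mathbf f)=\max_{\mathbf a\in\Sigma_n}\langle\mathbf f,\mathbf a\rangle-F_{\mathbf b}(\mathbf a)$ for $\mathbf f\in\mathbb R^n$ (a differentiable function on $\mathbb R^n$). $J^*(\mathbf g)=\sup_{\mathbf y\in\mathbb R^p}\langle\mathbf g,\mathbf y\rangle-J(\mathbf y)$. *)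

theory Defs
  imports "HOL-Analysis.Analysis"
begin

definition prob_simplex :: "(real^'n) set" where
  "prob_simplex = {a. (\<forall>i. 0 \<le> a$i) \<and> (\<Sum>i\<in>UNIV. a$i) = 1}"

definition transport_plans :: "real^'n \<Rightarrow> real^'n \<Rightarrow> (real^'n^'n) set" where
  "transport_plans a b = {P. (\<forall>i j. 0 \<le> P$i$j) \<and> (\<forall>i. (\<Sum>j\<in>UNIV. P$i$j) = a$i)
                               \<and> (\<forall>j. (\<Sum>i\<in>UNIV. P$i$j) = b$j)}"

definition entropy :: "real^'n^'n \<Rightarrow> real" where
  "entropy P = - (\<Sum>i\<in>UNIV. \<Sum>j\<in>UNIV. (if P$i$j = 0 then 0 else P$i$j * ln (P$i$j)) - P$i$j)"

text \<open>Entropic OT cost W^eps_C(a,b) (a minimum, attained; written as an infimum).\<close>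
definition W_eps :: "real \<Rightarrow> real^'n^'n \<Rightarrow> real^'n \<Rightarrow> real^'n \<Rightarrow> real" where
  "W_eps eps C a b = Inf ((\<lambda>P. (\<Sum>i\<in>UNIV. \<Sum>j\<in>UNIV. P$i$j * C$i$j) - eps * entropy P)
                           ` transport_plans a b)"

definition F_b :: "real \<Rightarrow> real^'n^'n \<Rightarrow> real^'n \<Rightarrow> real^'n \<Rightarrow> real" where
  "F_b eps C b a = W_eps eps C a b"

text \<open>F*_b(f) = max over the simplex (written as a supremum; it is attained).\<close>
definition F_b_conj :: "real \<Rightarrow> real^'n^'n \<Rightarrow> real^'n \<Rightarrow> real^'n \<Rightarrow> real" where
  "F_b_conj eps C b f = Sup ((\<lambda>a. f \<bullet> a - F_b eps C b a) ` prob_simplex)"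

definition conj_fun :: "(real^'p \<Rightarrow> real) \<Rightarrow> real^'p \<Rightarrow> ereal" where
  "conj_fun J g = (SUP y\<in>UNIV. ereal (g \<bullet> y - J y))"

definition primal_obj ::
  "real \<Rightarrow> real^'n^'n \<Rightarrow> ('k::finite \<Rightarrow> real^'n) \<Rightarrow> ('k \<Rightarrow> real)
     \<Rightarrow> (real^'n \<Rightarrow> real^'p) \<Rightarrow> (real^'p \<Rightarrow> real) \<Rightarrow> real^'n \<Rightarrow> real" where
  "primal_obj eps C b lam A J a = (\<Sum>k\<in>UNIV. lam k * F_b eps C (b k) a) + J (A a)"

definition dual_obj ::
  "real \<Rightarrow> real^'n^'n \<Rightarrow> ('k::finite \<Rightarrow> real^'n) \<Rightarrow> ('k \<Rightarrow> real)
     \<Rightarrow> (real^'p \<Rightarrow> real) \<Rightarrow> ('k \<Rightarrow> real^'n) \<Rightarrow> real^'p \<Rightarrow> ereal" where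
  "dual_obj eps C b lam J f g = ereal (\<Sum>k\<in>UNIV. lam k * F_b_conj eps C (b k) (f k)) + conj_fun J g"

definition dual_feasible ::
  "('k::finite \<Rightarrow> real) \<Rightarrow> (real^'n \<Rightarrow> real^'p) \<Rightarrow> ('k \<Rightarrow> real^'n) \<Rightarrow> real^'p \<Rightarrow> bool" where
  "dual_feasible lam A f g \<longleftrightarrow> adjoint A g + (\<Sum>k\<in>UNIV. lam k *\<^sub>R f k) = 0"

end

theory Submission
  imports Defs
begin


definition xlnx :: "real \<Rightarrow> real" where "xlnx x = (if x = 0 then 0 else x * ln x)"

lemma gibbs:
  fixes x c :: "'i::finite \<Rightarrow> real"
  assumes eps: "eps > 0" and x0: "\<forall>i. 0 \<le> x i" and xs: "(\<Sum>i\<in>UNIV. x i) = \<beta>"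
  shows "(\<Sum>i\<in>UNIV. x i * c i - eps * (xlnx (x i) - x i))
     \<le> eps * \<beta> * ln (\<Sum>i\<in>UNIV. exp (c i / eps)) - eps * xlnx \<beta> + eps * \<beta>"
proof (cases "\<beta> = 0")
  case True
  then have "\<forall>i. x i = 0" using x0 xs by (simp add: sum_nonneg_eq_0_iff)
  then show ?thesis using True by (simp add: xlnx_def)
next
  case False
  have bpos: "\<beta> > 0" using False xs x0 by (metis sum_nonneg order_le_less)
  define Z where "Z = (\<Sum>i\<in>UNIV. exp (c i / eps))"
  have Zpos: "Z > 0" unfolding Z_def by (simp add: sum_pos)
  have tm: "x i * c i - eps * (xlnx (x i) - x i)
     \<le> eps * x i * (ln Z - ln \<beta>) + eps * (\<beta> * exp (c i / eps) / Z - x i) + eps * x i" for i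
  proof (cases "x i = 0")
    case True
    then show ?thesis using eps Zpos bpos by (simp add: xlnx_def)
  next
    case False
    then have xp: "x i > 0" using x0[rule_format, of i] by linarith
    define t where "t = \<beta> * exp (c i / eps) / Z / x i"
    have tp: "t > 0" unfolding t_def using xp bpos Zpos by simp
    have lt: "ln t = ln \<beta> + c i / eps - ln Z - ln (x i)"
      unfolding t_def using xp bpos Zpos by (simp add: ln_div ln_mult)
    have "ln t \<le> t - 1" using tp by (rule ln_le_minus_one)
    then have "eps * x i * ln t \<le> eps * x i * (t - 1)" using eps xp by simp
    moreover have "eps * x i * (t - 1) = eps * (\<beta> * exp (c i / eps) / Z - x i)"
      unfolding t_def using xp by (simp add: field_simps)
    moreover have "x i * c i - eps * (xlnx (x i) - x i) = eps * x i * (ln Z - ln \<beta>) + eps * x i * ln t + eps * x i"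
      using False eps by (simp add: xlnx_def lt field_simps)
    ultimately show ?thesis by linarith
  qed
  have "(\<Sum>i\<in>UNIV. x i * c i - eps * (xlnx (x i) - x i))
     \<le> (\<Sum>i\<in>UNIV. eps * x i * (ln Z - ln \<beta>) + eps * (\<beta> * exp (c i / eps) / Z - x i) + eps * x i)"
    by (rule sum_mono) (rule tm)
  also have "\<dots> = eps * \<beta> * (ln Z - ln \<beta>) + eps * (\<beta> * Z / Z - \<beta>) + eps * \<beta>"
  proof -
    have s1: "(\<Sum>i\<in>UNIV. eps * x i * (ln Z - ln \<beta>)) = eps * \<beta> * (ln Z - ln \<beta>)"
      by (simp add: sum_distrib_right[symmetric] sum_distrib_left[symmetric] xs)
    have s2: "(\<Sum>i\<in>UNIV. eps * (\<beta> * exp (c i / eps) / Z - x i)) = eps * (\<beta> * Z / Z - \<beta>)"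
      by (simp add: sum_distrib_left[symmetric] sum_subtractf sum_divide_distrib[symmetric] xs Z_def)
    have s3: "(\<Sum>i\<in>UNIV. eps * x i) = eps * \<beta>" by (simp add: sum_distrib_left[symmetric] xs)
    show ?thesis by (simp only: sum.distrib s1 s2 s3)
  qed
  also have "\<dots> = eps * \<beta> * ln Z - eps * xlnx \<beta> + eps * \<beta>"
    using Zpos False by (simp add: xlnx_def algebra_simps)
  finally show ?thesis unfolding Z_def .
qed

lemma gibbs_eq:
  fixes c :: "'i::finite \<Rightarrow> real"
  assumes eps: "eps > 0" and b0: "\<beta> \<ge> 0"
  defines "Z \<equiv> (\<Sum>i\<in>UNIV. exp (c i / eps))"
  defines "x \<equiv> (\<lambda>i. \<beta> * exp (c i / eps) / Z)"
  shows "(\<Sum>i\<in>UNIV. x i * c i - eps * (xlnx (x i) - x i))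
     = eps * \<beta> * ln Z - eps * xlnx \<beta> + eps * \<beta>"
proof (cases "\<beta> = 0")
  case True
  then show ?thesis by (simp add: x_def xlnx_def)
next
  case False
  have bpos: "\<beta> > 0" using False b0 by simp
  have Zpos: "Z > 0" unfolding Z_def by (simp add: sum_pos)
  have tm: "x i * c i - eps * (xlnx (x i) - x i) = x i * (eps * ln Z - eps * ln \<beta> + eps)" for i
  proof -
    have xp: "x i > 0" unfolding x_def using bpos Zpos by simp
    have "ln (x i) = ln \<beta> + c i / eps - ln Z" unfolding x_def using bpos Zpos by (simp add: ln_div ln_mult)
    then have h2: "eps * ln (x i) = eps * ln \<beta> + c i - eps * ln Z" using eps by (simp add: field_simps)
    have e: "x i * (eps * ln (x i)) = x i * (eps * ln \<beta> + c i - eps * ln Z)" unfolding h2 ..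
    have "x i * c i - eps * (xlnx (x i) - x i) = x i * c i - x i * (eps * ln (x i)) + eps * x i"
      using xp by (simp add: xlnx_def algebra_simps)
    also have "\<dots> = x i * (eps * ln Z - eps * ln \<beta> + eps)" unfolding e by (simp add: algebra_simps)
    finally show ?thesis .
  qed
  have sx: "(\<Sum>i\<in>UNIV. x i) = \<beta>" unfolding x_def using Zpos
    by (simp add: sum_divide_distrib[symmetric] sum_distrib_left[symmetric] Z_def)
  have "(\<Sum>i\<in>UNIV. x i * c i - eps * (xlnx (x i) - x i)) = (\<Sum>i\<in>UNIV. x i * (eps * ln Z - eps * ln \<beta> + eps))"
    by (simp only: tm)
  also have "\<dots> = \<beta> * (eps * ln Z - eps * ln \<beta> + eps)" by (simp only: sum_distrib_right[symmetric] sx)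
  finally show ?thesis using False by (simp add: xlnx_def algebra_simps)
qed


definition Zs :: "real \<Rightarrow> real^'n^'n \<Rightarrow> real^'n \<Rightarrow> 'n \<Rightarrow> real" where
  "Zs eps C f j = (\<Sum>i\<in>UNIV. exp ((f$i - C$i$j) / eps))"

definition Phi :: "real \<Rightarrow> real^'n^'n \<Rightarrow> real^'n \<Rightarrow> real^'n \<Rightarrow> real" where
  "Phi eps C b f = (\<Sum>j\<in>UNIV. eps * b$j * ln (Zs eps C f j) - eps * xlnx (b$j) + eps * b$j)"

definition Pst :: "real \<Rightarrow> real^'n^'n \<Rightarrow> real^'n \<Rightarrow> real^'n \<Rightarrow> real^'n^'n" where
  "Pst eps C b f = (\<chi> i j. b$j * exp ((f$i - C$i$j) / eps) / Zs eps C f j)"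

definition ast :: "real \<Rightarrow> real^'n^'n \<Rightarrow> real^'n \<Rightarrow> real^'n \<Rightarrow> real^'n" where
  "ast eps C b f = (\<chi> i. \<Sum>j\<in>UNIV. b$j * exp ((f$i - C$i$j) / eps) / Zs eps C f j)"

definition objW :: "real \<Rightarrow> real^'n^'n \<Rightarrow> real^'n^'n \<Rightarrow> real" where
  "objW eps C P = (\<Sum>i\<in>UNIV. \<Sum>j\<in>UNIV. P$i$j * C$i$j) - eps * entropy P"

lemma Zs_pos: "Zs eps C f j > 0"
  unfolding Zs_def by (simp add: sum_pos)

lemma F_b_eq: "F_b eps C b a = Inf (objW eps C ` transport_plans a b)"
  unfolding F_b_def W_eps_def objW_def ..

lemma entropy_xlnx: "entropy P = - (\<Sum>i\<in>UNIV. \<Sum>j\<in>UNIV. xlnx (P$i$j) - P$i$j)"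
  unfolding entropy_def xlnx_def ..

lemma inner_vec_real: "(f::real^'n) \<bullet> a = (\<Sum>i\<in>UNIV. f$i * a$i)"
  by (simp add: inner_vec_def)

lemma objW_bound:
  assumes eps: "eps > 0" and P: "P \<in> transport_plans a b"
  shows "f \<bullet> a - objW eps C P \<le> Phi eps C b f"
proof -
  have P0: "\<forall>i j. 0 \<le> P$i$j" and Pr: "\<forall>i. (\<Sum>j\<in>UNIV. P$i$j) = a$i"
    and Pc: "\<forall>j. (\<Sum>i\<in>UNIV. P$i$j) = b$j" using P unfolding transport_plans_def by auto
  have "f \<bullet> a = (\<Sum>i\<in>UNIV. f$i * (\<Sum>j\<in>UNIV. P$i$j))" using Pr by (simp add: inner_vec_real)
  also have "\<dots> = (\<Sum>i\<in>UNIV. \<Sum>j\<in>UNIV. P$i$j * f$i)"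
    by (simp add: sum_distrib_left mult.commute)
  also have "\<dots> = (\<Sum>j\<in>UNIV. \<Sum>i\<in>UNIV. P$i$j * f$i)" by (rule sum.swap)
  finally have fa: "f \<bullet> a = (\<Sum>j\<in>UNIV. \<Sum>i\<in>UNIV. P$i$j * f$i)" .
  have "f \<bullet> a - objW eps C P =
     (\<Sum>j\<in>UNIV. \<Sum>i\<in>UNIV. P$i$j * (f$i - C$i$j) - eps * (xlnx (P$i$j) - P$i$j))"
  proof -
    have s1: "(\<Sum>i\<in>UNIV. \<Sum>j\<in>UNIV. P$i$j * C$i$j) = (\<Sum>j\<in>UNIV. \<Sum>i\<in>UNIV. P$i$j * C$i$j)"
      by (rule sum.swap)
    have s2: "(\<Sum>i\<in>UNIV. \<Sum>j\<in>UNIV. xlnx (P$i$j) - P$i$j) = (\<Sum>j\<in>UNIV. \<Sum>i\<in>UNIV. xlnx (P$i$j) - P$i$j)"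
      by (rule sum.swap)
    have s3: "(\<Sum>j\<in>UNIV. \<Sum>i\<in>UNIV. P$i$j * (f$i - C$i$j) - eps * (xlnx (P$i$j) - P$i$j))
       = (\<Sum>j\<in>UNIV. \<Sum>i\<in>UNIV. P$i$j * f$i) - (\<Sum>j\<in>UNIV. \<Sum>i\<in>UNIV. P$i$j * C$i$j)
         - eps * (\<Sum>j\<in>UNIV. \<Sum>i\<in>UNIV. xlnx (P$i$j) - P$i$j)"
      by (simp add: sum_subtractf sum_distrib_left right_diff_distrib)
    show ?thesis unfolding fa objW_def entropy_xlnx s1 s2 s3 by simp
  qed
  also have "\<dots> \<le> (\<Sum>j\<in>UNIV. eps * b$j * ln (Zs eps C f j) - eps * xlnx (b$j) + eps * b$j)"
  proof (rule sum_mono)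
    fix j
    show "(\<Sum>i\<in>UNIV. P$i$j * (f$i - C$i$j) - eps * (xlnx (P$i$j) - P$i$j))
        \<le> eps * b$j * ln (Zs eps C f j) - eps * xlnx (b$j) + eps * b$j"
      using gibbs[OF eps, of "\<lambda>i. P$i$j" "b$j" "\<lambda>i. f$i - C$i$j"] P0 Pc unfolding Zs_def by auto
  qed
  finally show ?thesis unfolding Phi_def .
qed

lemma Pst_plan:
  assumes b: "b \<in> prob_simplex"
  shows "Pst eps C b f \<in> transport_plans (ast eps C b f) b"
proof -
  have b0: "\<forall>j. 0 \<le> b$j" using b unfolding prob_simplex_def by auto
  have "(\<Sum>i\<in>UNIV. b$j * exp ((f$i - C$i$j) / eps) / Zs eps C f j) = b$j" for j
    using Zs_pos[of eps C f j]
    by (simp add: sum_divide_distrib[symmetric] sum_distrib_left[symmetric] Zs_def[symmetric])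
  then show ?thesis unfolding transport_plans_def Pst_def ast_def
    using b0 Zs_pos by (auto intro!: divide_nonneg_pos mult_nonneg_nonneg)
qed

lemma ast_simplex:
  assumes b: "b \<in> prob_simplex"
  shows "ast eps C b f \<in> prob_simplex"
proof -
  have P: "Pst eps C b f \<in> transport_plans (ast eps C b f) b" by (rule Pst_plan[OF b])
  have "(\<Sum>i\<in>UNIV. (ast eps C b f)$i) = (\<Sum>i\<in>UNIV. \<Sum>j\<in>UNIV. (Pst eps C b f)$i$j)"
    using P unfolding transport_plans_def by auto
  also have "\<dots> = (\<Sum>j\<in>UNIV. \<Sum>i\<in>UNIV. (Pst eps C b f)$i$j)" by (rule sum.swap)
  also have "\<dots> = (\<Sum>j\<in>UNIV. b$j)" using P unfolding transport_plans_def by auto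
  also have "\<dots> = 1" using b unfolding prob_simplex_def by auto
  finally have s: "(\<Sum>i\<in>UNIV. (ast eps C b f)$i) = 1" .
  have "\<forall>i. 0 \<le> (ast eps C b f)$i"
  proof
    fix i
    have "(ast eps C b f)$i = (\<Sum>j\<in>UNIV. (Pst eps C b f)$i$j)" using P unfolding transport_plans_def by auto
    moreover have "0 \<le> (\<Sum>j\<in>UNIV. (Pst eps C b f)$i$j)"
      using Zs_pos b unfolding Pst_def prob_simplex_def by (auto intro!: sum_nonneg divide_nonneg_pos mult_nonneg_nonneg)
    ultimately show "0 \<le> (ast eps C b f)$i" by simp
  qed
  with s show ?thesis unfolding prob_simplex_def by auto
qed

lemma objW_Pst:
  assumes eps: "eps > 0" and b: "b \<in> prob_simplex"
  shows "objW eps C (Pst eps C b f) = f \<bullet> ast eps C b f - Phi eps C b f"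
proof -
  let ?P = "Pst eps C b f"
  have P: "?P \<in> transport_plans (ast eps C b f) b" by (rule Pst_plan[OF b])
  have b0: "\<forall>j. 0 \<le> b$j" using b unfolding prob_simplex_def by auto
  have P0: "\<forall>i j. 0 \<le> ?P$i$j" and Pr: "\<forall>i. (\<Sum>j\<in>UNIV. ?P$i$j) = (ast eps C b f)$i"
     using P unfolding transport_plans_def by auto
  have "f \<bullet> ast eps C b f = (\<Sum>i\<in>UNIV. f$i * (\<Sum>j\<in>UNIV. ?P$i$j))" using Pr by (simp add: inner_vec_real)
  also have "\<dots> = (\<Sum>i\<in>UNIV. \<Sum>j\<in>UNIV. ?P$i$j * f$i)"
    by (simp add: sum_distrib_left mult.commute)
  also have "\<dots> = (\<Sum>j\<in>UNIV. \<Sum>i\<in>UNIV. ?P$i$j * f$i)" by (rule sum.swap)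
  finally have fa: "f \<bullet> ast eps C b f = (\<Sum>j\<in>UNIV. \<Sum>i\<in>UNIV. ?P$i$j * f$i)" .
  have "f \<bullet> ast eps C b f - objW eps C ?P =
     (\<Sum>j\<in>UNIV. \<Sum>i\<in>UNIV. ?P$i$j * (f$i - C$i$j) - eps * (xlnx (?P$i$j) - ?P$i$j))"
  proof -
    have s1: "(\<Sum>i\<in>UNIV. \<Sum>j\<in>UNIV. ?P$i$j * C$i$j) = (\<Sum>j\<in>UNIV. \<Sum>i\<in>UNIV. ?P$i$j * C$i$j)"
      by (rule sum.swap)
    have s2: "(\<Sum>i\<in>UNIV. \<Sum>j\<in>UNIV. xlnx (?P$i$j) - ?P$i$j) = (\<Sum>j\<in>UNIV. \<Sum>i\<in>UNIV. xlnx (?P$i$j) - ?P$i$j)"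
      by (rule sum.swap)
    have s3: "(\<Sum>j\<in>UNIV. \<Sum>i\<in>UNIV. ?P$i$j * (f$i - C$i$j) - eps * (xlnx (?P$i$j) - ?P$i$j))
       = (\<Sum>j\<in>UNIV. \<Sum>i\<in>UNIV. ?P$i$j * f$i) - (\<Sum>j\<in>UNIV. \<Sum>i\<in>UNIV. ?P$i$j * C$i$j)
         - eps * (\<Sum>j\<in>UNIV. \<Sum>i\<in>UNIV. xlnx (?P$i$j) - ?P$i$j)"
      by (simp add: sum_subtractf sum_distrib_left right_diff_distrib)
    show ?thesis unfolding fa objW_def entropy_xlnx s1 s2 s3 by simp
  qed
  also have "\<dots> = (\<Sum>j\<in>UNIV. eps * b$j * ln (Zs eps C f j) - eps * xlnx (b$j) + eps * b$j)"
  proof (rule sum.cong[OF refl])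
    fix j
    show "(\<Sum>i\<in>UNIV. ?P$i$j * (f$i - C$i$j) - eps * (xlnx (?P$i$j) - ?P$i$j))
        = eps * b$j * ln (Zs eps C f j) - eps * xlnx (b$j) + eps * b$j"
      using gibbs_eq[OF eps, of "b$j" "\<lambda>i. f$i - C$i$j"] b0 unfolding Zs_def Pst_def by auto
  qed
  finally show ?thesis unfolding Phi_def by simp
qed


lemma plans_nonempty:
  assumes a: "a \<in> prob_simplex" and b: "b \<in> prob_simplex"
  shows "(\<chi> i j. a$i * b$j) \<in> transport_plans a b"
  using a b unfolding transport_plans_def prob_simplex_def
  by (auto simp: sum_distrib_left[symmetric] sum_distrib_right[symmetric])

lemma Fb_lower:
  assumes eps: "eps > 0" and a: "a \<in> prob_simplex" and b: "b \<in> prob_simplex"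
  shows "f \<bullet> a - Phi eps C b f \<le> F_b eps C b a"
  unfolding F_b_eq
proof (rule cInf_greatest)
  show "objW eps C ` transport_plans a b \<noteq> {}" using plans_nonempty[OF a b] by blast
  fix x assume "x \<in> objW eps C ` transport_plans a b"
  then obtain P where P: "P \<in> transport_plans a b" and x: "x = objW eps C P" by blast
  show "f \<bullet> a - Phi eps C b f \<le> x" using objW_bound[OF eps P, of f C] x by simp
qed

lemma Fb_ast:
  assumes eps: "eps > 0" and b: "b \<in> prob_simplex"
  shows "F_b eps C b (ast eps C b f) = f \<bullet> ast eps C b f - Phi eps C b f"
proof (rule antisym)
  show "F_b eps C b (ast eps C b f) \<le> f \<bullet> ast eps C b f - Phi eps C b f"
    unfolding F_b_eq objW_Pst[OF eps b, symmetric]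
  proof (rule cInf_lower)
    show "objW eps C (Pst eps C b f) \<in> objW eps C ` transport_plans (ast eps C b f) b"
      using Pst_plan[OF b] by blast
    show "bdd_below (objW eps C ` transport_plans (ast eps C b f) b)"
    proof (rule bdd_belowI[where m="f \<bullet> ast eps C b f - Phi eps C b f"])
      fix x assume "x \<in> objW eps C ` transport_plans (ast eps C b f) b"
      then obtain P where P: "P \<in> transport_plans (ast eps C b f) b" and x: "x = objW eps C P" by blast
      show "f \<bullet> ast eps C b f - Phi eps C b f \<le> x" using objW_bound[OF eps P, of f C] x by simp
    qed
  qed
  show "f \<bullet> ast eps C b f - Phi eps C b f \<le> F_b eps C b (ast eps C b f)"
    by (rule Fb_lower[OF eps ast_simplex[OF b] b])
qed

lemma Fconj_eq:
  assumes eps: "eps > 0" and b: "b \<in> prob_simplex"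
  shows "F_b_conj eps C b f = Phi eps C b f"
  unfolding F_b_conj_def
proof (rule cSup_eq_maximum)
  show "Phi eps C b f \<in> (\<lambda>a. f \<bullet> a - F_b eps C b a) ` prob_simplex"
    using ast_simplex[OF b] Fb_ast[OF eps b] by (force intro!: image_eqI[where x="ast eps C b f"])
  fix x assume "x \<in> (\<lambda>a. f \<bullet> a - F_b eps C b a) ` prob_simplex"
  then obtain a where a: "a \<in> prob_simplex" and x: "x = f \<bullet> a - F_b eps C b a" by blast
  show "x \<le> Phi eps C b f" using Fb_lower[OF eps a b, of f C] x by simp
qed

lemma Phi_shift:
  assumes eps: "eps > 0" and b: "b \<in> prob_simplex"
  shows "Phi eps C b (f + (\<chi> i. c)) = Phi eps C b f + c"
proof -
  have Z: "Zs eps C (f + (\<chi> i. c)) j = exp (c / eps) * Zs eps C f j" for j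
  proof -
    have "exp (((f + (\<chi> i. c))$i - C$i$j)/eps) = exp (c/eps) * exp ((f$i - C$i$j)/eps)" for i
      using eps by (simp add: exp_add[symmetric] field_simps)
    then show ?thesis unfolding Zs_def by (simp add: sum_distrib_left)
  qed
  have l: "ln (Zs eps C (f + (\<chi> i. c)) j) = c / eps + ln (Zs eps C f j)" for j
  proof -
    have "Zs eps C f j > 0" by (rule Zs_pos)
    then show ?thesis unfolding Z by (simp add: ln_mult)
  qed
  have "Phi eps C b (f + (\<chi> i. c)) = Phi eps C b f + (\<Sum>j\<in>UNIV. c * b$j)"
  proof -
    have nz: "\<And>j. Zs eps C f j \<noteq> 0" using Zs_pos by (metis less_irrefl)
    show ?thesis unfolding Phi_def l using eps nz by (simp add: sum.distrib[symmetric] algebra_simps)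
  qed
  also have "\<dots> = Phi eps C b f + c" using b unfolding prob_simplex_def by (simp add: sum_distrib_left[symmetric])
  finally show ?thesis .
qed

lemma Phi_deriv:
  assumes eps: "eps > 0"
  shows "(Phi eps C b has_derivative (\<lambda>h. ast eps C b f \<bullet> h)) (at f)"
proof -
  have dZ: "((\<lambda>f. Zs eps C f j) has_derivative (\<lambda>h. \<Sum>i\<in>UNIV. exp ((f$i - C$i$j)/eps) * (h$i / eps))) (at f)" for j
  proof -
    have "((\<lambda>f. exp ((f$i - C$i$j)/eps)) has_derivative (\<lambda>h. exp ((f$i - C$i$j)/eps) * (h$i / eps))) (at f)" for i
    proof -
      have "((\<lambda>x. x$i) has_derivative (\<lambda>h. h$i)) (at f)"
        by (rule bounded_linear_imp_has_derivative) (rule bounded_linear_vec_nth)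
      then show ?thesis using eps by (auto intro!: derivative_eq_intros simp: field_simps)
    qed
    then show ?thesis unfolding Zs_def by (rule has_derivative_sum)
  qed
  have dj: "((\<lambda>f. eps * b$j * ln (Zs eps C f j) - eps * xlnx (b$j) + eps * b$j) has_derivative
        (\<lambda>h. eps * b$j * ((\<Sum>i\<in>UNIV. exp ((f$i - C$i$j)/eps) * (h$i / eps)) / Zs eps C f j))) (at f)" for j
    using Zs_pos by (auto intro!: derivative_eq_intros dZ simp: field_simps)
  have "(Phi eps C b has_derivative (\<lambda>h. \<Sum>j\<in>UNIV. eps * b$j * ((\<Sum>i\<in>UNIV. exp ((f$i - C$i$j)/eps) * (h$i / eps)) / Zs eps C f j))) (at f)"
    unfolding Phi_def[abs_def] by (rule has_derivative_sum) (rule dj)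
  moreover have "(\<lambda>h. \<Sum>j\<in>UNIV. eps * b$j * ((\<Sum>i\<in>UNIV. exp ((f$i - C$i$j)/eps) * (h$i / eps)) / Zs eps C f j))
      = (\<lambda>h. ast eps C b f \<bullet> h)"
  proof
    fix h
    have "(\<Sum>j\<in>UNIV. eps * b$j * ((\<Sum>i\<in>UNIV. exp ((f$i - C$i$j)/eps) * (h$i / eps)) / Zs eps C f j))
       = (\<Sum>j\<in>UNIV. \<Sum>i\<in>UNIV. b$j * exp ((f$i - C$i$j)/eps) / Zs eps C f j * h$i)"
      using eps by (simp add: sum_distrib_left sum_divide_distrib field_simps)
    also have "\<dots> = (\<Sum>i\<in>UNIV. \<Sum>j\<in>UNIV. b$j * exp ((f$i - C$i$j)/eps) / Zs eps C f j * h$i)"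
      by (rule sum.swap)
    also have "\<dots> = ast eps C b f \<bullet> h"
      unfolding inner_vec_real ast_def by (simp add: sum_distrib_right)
    finally show "(\<Sum>j\<in>UNIV. eps * b$j * ((\<Sum>i\<in>UNIV. exp ((f$i - C$i$j)/eps) * (h$i / eps)) / Zs eps C f j))
       = ast eps C b f \<bullet> h" .
  qed
  ultimately show ?thesis by simp
qed


lemma Phi_line:
  assumes eps: "eps > 0"
  shows "((\<lambda>t. Phi eps C b (x + t *\<^sub>R w)) has_field_derivative (ast eps C b x \<bullet> w)) (at 0)"
proof -
  have d1: "((\<lambda>t. x + t *\<^sub>R w) has_derivative (\<lambda>s. s *\<^sub>R w)) (at 0)"
    by (auto intro!: derivative_eq_intros)
  have d2: "(Phi eps C b has_derivative (\<lambda>h. ast eps C b x \<bullet> h)) (at (x + 0 *\<^sub>R w))"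
    using Phi_deriv[OF eps, of C b x] by simp
  have "((\<lambda>t. Phi eps C b (x + t *\<^sub>R w)) has_derivative (\<lambda>s. ast eps C b x \<bullet> (s *\<^sub>R w))) (at 0)"
    using has_derivative_compose[OF d1 d2] .
  moreover have "(\<lambda>s. ast eps C b x \<bullet> (s *\<^sub>R w)) = (*) (ast eps C b x \<bullet> w)"
    by (auto simp: mult.commute)
  ultimately show ?thesis unfolding has_field_derivative_def by simp
qed




lemma subgrad_exists:
  fixes J :: "'a::euclidean_space \<Rightarrow> real"
  assumes cvx: "convex_on UNIV J"
  shows "\<exists>g. \<forall>y. J x + g \<bullet> (y - x) \<le> J y"
proof -
  define E where "E = epigraph UNIV J"
  have cE: "convex E" unfolding E_def by (rule convex_epigraphI[OF cvx])
  have zE: "(x, J x) \<in> E" unfolding E_def by (simp add: mem_epigraph)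
  have znot: "(x, J x) \<notin> rel_interior E"
  proof
    assume "(x, J x) \<in> rel_interior E"
    then obtain e where e: "e > 0" "cball (x, J x) e \<inter> affine hull E \<subseteq> E"
      unfolding rel_interior_cball by blast
    have z1: "(x, J x + 1) \<in> E" unfolding E_def by (simp add: mem_epigraph)
    have "(1 + e) *\<^sub>R (x, J x) + (- e) *\<^sub>R (x, J x + 1) \<in> affine hull E"
      by (rule mem_affine[OF affine_affine_hull]) (use zE z1 hull_inc in auto)
    moreover have "(1 + e) *\<^sub>R (x, J x) + (- e) *\<^sub>R (x, J x + 1) = (x, J x - e)"
      by (simp add: algebra_simps)
    moreover have "(x, J x - e) \<in> cball (x, J x) e"
      using e by (simp add: dist_Pair_Pair)
    ultimately have "(x, J x - e) \<in> E" using e by auto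
    then show False using e unfolding E_def by (simp add: mem_epigraph)
  qed
  obtain a where a0: "a \<noteq> 0" and aE: "\<And>y. y \<in> E \<Longrightarrow> a \<bullet> (x, J x) \<le> a \<bullet> y"
    and "\<And>y. y \<in> rel_interior E \<Longrightarrow> a \<bullet> (x, J x) < a \<bullet> y"
    using supporting_hyperplane_rel_boundary[OF cE zE znot] by metis
  obtain a1 a2 where a: "a = (a1, a2)" by (cases a)
  have key: "a1 \<bullet> x + a2 * J x \<le> a1 \<bullet> y + a2 * t" if "J y \<le> t" for y t
    using aE[of "(y, t)"] that unfolding a E_def by (simp add: mem_epigraph)
  have "a2 * J x \<le> a2 * (J x + 1)" using key[of x "J x + 1"] by simp
  then have a2nn: "a2 \<ge> 0" by (simp add: algebra_simps)
  have a2pos: "a2 > 0"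
  proof (rule ccontr)
    assume "\<not> a2 > 0"
    then have a20: "a2 = 0" using a2nn by simp
    have "a1 \<bullet> x \<le> a1 \<bullet> (x - a1)" using key[of "x - a1" "J (x - a1)"] a20 by simp
    then have "a1 \<bullet> a1 \<le> 0" by (simp add: inner_diff_right)
    then have "a1 = 0" by (metis inner_gt_zero_iff not_le)
    then show False using a0 a20 a by (simp add: zero_prod_def)
  qed
  show ?thesis
  proof (intro exI allI)
    fix y
    have "a1 \<bullet> x + a2 * J x \<le> a1 \<bullet> y + a2 * J y" using key[of y "J y"] by simp
    then have "a2 * (J x + (- (1/a2)) *\<^sub>R a1 \<bullet> (y - x)) \<le> a2 * J y"
      using a2pos by (simp add: inner_diff_right algebra_simps)
    then show "J x + (- (1/a2)) *\<^sub>R a1 \<bullet> (y - x) \<le> J y"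
      using a2pos by simp
  qed
qed

lemma convex_bounded_ball:
  fixes J :: "'a::euclidean_space \<Rightarrow> real"
  assumes cvx: "convex_on UNIV J"
  shows "\<exists>M. \<forall>y\<in>cball c r. J y \<le> M"
proof (cases "cball c r = {}")
  case True then show ?thesis by auto
next
  case False
  have "continuous_on UNIV J" by (rule convex_on_continuous[OF open_UNIV cvx])
  then have "continuous_on (cball c r) J" by (rule continuous_on_subset) auto
  then obtain x where "x \<in> cball c r" "\<forall>y\<in>cball c r. J y \<le> J x"
    using continuous_attains_sup[OF compact_cball False] by blast
  then show ?thesis by blast
qed




definition unif :: "real^'n" where "unif = (\<chi> i. 1 / real CARD('n))"
definition onev :: "real^'n" where "onev = (\<chi> i. 1)"

lemma unif_simplex: "unif \<in> prob_simplex"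
  unfolding unif_def prob_simplex_def by simp

lemma inner_unif: "(v::real^'n) \<bullet> unif = (\<Sum>i\<in>UNIV. v$i) / real CARD('n)"
  unfolding unif_def inner_vec_real by (simp add: sum_divide_distrib)

lemma onev_unif: "(d *\<^sub>R (onev::real^'n)) \<bullet> unif = d"
  unfolding inner_unif onev_def by simp

lemma onev_chi: "(\<chi> i. d) = d *\<^sub>R (onev::real^'n)"
  unfolding onev_def by (simp add: vec_eq_iff)

lemma axis_simplex: "axis i (1::real) \<in> prob_simplex"
  unfolding prob_simplex_def axis_def by simp

lemma inner_axis1: "(v::real^'n) \<bullet> axis i 1 = v$i"
  by (simp add: inner_axis)

lemma abs_aux: "(x::real) - m \<le> r \<Longrightarrow> - q \<le> x - m \<Longrightarrow> 0 \<le> r \<Longrightarrow> 0 \<le> q \<Longrightarrow> \<bar>x\<bar> \<le> \<bar>m\<bar> + q + r"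
  by linarith

locale OT =
  fixes eps :: real and C :: "real^'n^'n" and b :: "'k::finite \<Rightarrow> real^'n"
    and lam :: "'k \<Rightarrow> real" and A :: "real^'n \<Rightarrow> real^'p" and J :: "real^'p \<Rightarrow> real"
  assumes eps_pos: "eps > 0"
    and b_simplex: "\<forall>k. b k \<in> prob_simplex"
    and lam_pos: "\<forall>k. lam k > 0"
    and lam_sum: "(\<Sum>k\<in>UNIV. lam k) = 1"
    and A_lin: "linear A"
    and J_convex: "convex_on UNIV J"
begin

abbreviation "Dl f g \<equiv> dual_obj eps C b lam J f g"
abbreviation "Pr a \<equiv> primal_obj eps C b lam A J a"
abbreviation "feas f g \<equiv> dual_feasible lam A f g"
abbreviation "Ph k \<equiv> Phi eps C (b k)"
abbreviation "Fk k \<equiv> F_b eps C (b k)"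
abbreviation "ak k \<equiv> ast eps C (b k)"

lemma Dl_eq: "Dl f g = ereal (\<Sum>k\<in>UNIV. lam k * Ph k (f k)) + conj_fun J g"
proof -
  have "\<And>k. F_b_conj eps C (b k) (f k) = Ph k (f k)" using Fconj_eq[OF eps_pos] b_simplex by blast
  then show ?thesis unfolding dual_obj_def by simp
qed

lemma conj_ge: "ereal (g \<bullet> y - J y) \<le> conj_fun J g"
  unfolding conj_fun_def by (rule SUP_upper) simp

lemma conj_le: "(\<And>y. g \<bullet> y - J y \<le> c) \<Longrightarrow> conj_fun J g \<le> ereal c"
  unfolding conj_fun_def by (rule SUP_least) simp

lemma conj_real: "conj_fun J g \<noteq> \<infinity> \<Longrightarrow> \<exists>c. conj_fun J g = ereal c"
proof -
  assume h: "conj_fun J g \<noteq> \<infinity>"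
  have "ereal (g \<bullet> 0 - J 0) \<le> conj_fun J g" by (rule conj_ge)
  then have "conj_fun J g \<noteq> -\<infinity>" by auto
  with h show ?thesis by (cases "conj_fun J g") auto
qed

lemma adj: "x \<bullet> adjoint A y = A x \<bullet> y"
  by (rule adjoint_clauses(1)[OF A_lin])

lemma weak:
  assumes fe: "feas f g" and a: "a \<in> prob_simplex"
  shows "- ereal (Pr a) \<le> Dl f g"
proof -
  have fe': "adjoint A g + (\<Sum>k\<in>UNIV. lam k *\<^sub>R f k) = 0" using fe unfolding dual_feasible_def .
  have s1: "(\<Sum>k\<in>UNIV. lam k * (f k \<bullet> a - Fk k a)) \<le> (\<Sum>k\<in>UNIV. lam k * Ph k (f k))"
  proof (rule sum_mono)
    fix k
    have "f k \<bullet> a - Fk k a \<le> Ph k (f k)" using Fb_lower[OF eps_pos a b_simplex[rule_format, of k], of "f k" C] by simp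
    then show "lam k * (f k \<bullet> a - Fk k a) \<le> lam k * Ph k (f k)"
      using lam_pos by (simp add: less_imp_le mult_left_mono)
  qed
  have s2: "(\<Sum>k\<in>UNIV. lam k * (f k \<bullet> a - Fk k a)) = (\<Sum>k\<in>UNIV. lam k *\<^sub>R f k) \<bullet> a - (\<Sum>k\<in>UNIV. lam k * Fk k a)"
    by (simp add: sum_subtractf right_diff_distrib inner_sum_left)
  have s3: "(\<Sum>k\<in>UNIV. lam k *\<^sub>R f k) \<bullet> a = - (A a \<bullet> g)"
  proof -
    have "(\<Sum>k\<in>UNIV. lam k *\<^sub>R f k) = - adjoint A g" using fe' by (simp add: eq_neg_iff_add_eq_0 add.commute)
    then show ?thesis using adj[of a g] by (simp add: inner_commute)
  qed
  have "- ereal (Pr a) = ereal (- (A a \<bullet> g) - (\<Sum>k\<in>UNIV. lam k * Fk k a)) + ereal (g \<bullet> A a - J (A a))"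
    unfolding primal_obj_def by (simp add: inner_commute)
  also have "\<dots> \<le> ereal (\<Sum>k\<in>UNIV. lam k * Ph k (f k)) + conj_fun J g"
    using s1 s2 s3 conj_ge[of g "A a"] by (intro add_mono) auto
  finally show ?thesis unfolding Dl_eq .
qed

lemma fin_point: "\<exists>f g. feas f g \<and> Dl f g < \<infinity>"
proof -
  obtain g0 where g0: "\<forall>y. J 0 + g0 \<bullet> (y - 0) \<le> J y" using subgrad_exists[OF J_convex] by blast
  have c: "conj_fun J g0 \<le> ereal (- J 0)" by (rule conj_le) (use g0 in \<open>auto simp: algebra_simps\<close>)
  define f0 where "f0 = (\<lambda>k::'k. - adjoint A g0)"
  have "feas f0 g0" unfolding dual_feasible_def f0_def
    by (simp add: sum_negf scaleR_sum_left[symmetric] lam_sum)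
  moreover have "Dl f0 g0 < \<infinity>" unfolding Dl_eq using c by (auto simp: less_le_trans)
  ultimately show ?thesis by blast
qed


abbreviation "Sf f \<equiv> (\<Sum>k\<in>UNIV. lam k * Ph k (f k))"

lemma opt_fin:
  assumes fe: "feas f g" and opt: "\<forall>f' g'. feas f' g' \<longrightarrow> Dl f g \<le> Dl f' g'"
  shows "\<exists>c. conj_fun J g = ereal c"
proof -
  obtain f0 g0 where "feas f0 g0" "Dl f0 g0 < \<infinity>" using fin_point by blast
  then have "Dl f g < \<infinity>" using opt by (meson le_less_trans)
  then have "conj_fun J g \<noteq> \<infinity>" unfolding Dl_eq by auto
  then show ?thesis by (rule conj_real)
qed

lemma common_grad:
  assumes fe: "feas f g" and opt: "\<forall>f' g'. feas f' g' \<longrightarrow> Dl f g \<le> Dl f' g'"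
  shows "ak k (f k) = ak l (f l)"
proof -
  obtain Jg where Jg: "conj_fun J g = ereal Jg" using opt_fin[OF fe opt] by blast
  have fe': "adjoint A g + (\<Sum>m\<in>UNIV. lam m *\<^sub>R f m) = 0" using fe unfolding dual_feasible_def .
  have Smin: "Sf f \<le> Sf f'" if "feas f' g" for f'
  proof -
    have "Dl f g \<le> Dl f' g" using opt that by blast
    then show ?thesis unfolding Dl_eq Jg by simp
  qed
  define v where "v = ak k (f k) - ak l (f l)"
  define X where "X = (\<lambda>m. (if m = k then (1 / lam k) *\<^sub>R v else 0) - (if m = l then (1 / lam l) *\<^sub>R v else 0))"
  have lk: "lam k \<noteq> 0" "lam l \<noteq> 0" using lam_pos by (metis less_irrefl)+
  have sX: "(\<Sum>m\<in>UNIV. lam m *\<^sub>R X m) = 0"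
  proof -
    have "(\<Sum>m\<in>UNIV. lam m *\<^sub>R X m) = (\<Sum>m\<in>UNIV. (if m = k then v else 0) - (if m = l then v else 0))"
      by (rule sum.cong) (auto simp: X_def lk scaleR_diff_right)
    also have "\<dots> = 0" by (simp add: sum_subtractf)
    finally show ?thesis .
  qed
  define h where "h = (\<lambda>t::real. Sf (\<lambda>m. f m + t *\<^sub>R X m))"
  have hmin: "h 0 \<le> h t" for t
  proof -
    have "feas (\<lambda>m. f m + t *\<^sub>R X m) g"
    proof -
      have "(\<Sum>m\<in>UNIV. lam m *\<^sub>R t *\<^sub>R X m) = t *\<^sub>R (\<Sum>m\<in>UNIV. lam m *\<^sub>R X m)"
        by (simp add: scaleR_sum_right mult.commute)
      then show ?thesis unfolding dual_feasible_def using fe' sX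
        by (simp add: scaleR_add_right sum.distrib)
    qed
    then show ?thesis unfolding h_def using Smin by simp
  qed
  have hd: "(h has_field_derivative (\<Sum>m\<in>UNIV. lam m * (ak m (f m) \<bullet> X m))) (at 0)"
    unfolding h_def by (intro DERIV_sum DERIV_cmult Phi_line[OF eps_pos])
  have "(\<Sum>m\<in>UNIV. lam m * (ak m (f m) \<bullet> X m)) = 0"
    by (rule DERIV_local_min[OF hd zero_less_one]) (use hmin in auto)
  moreover have "(\<Sum>m\<in>UNIV. lam m * (ak m (f m) \<bullet> X m))
      = (\<Sum>m\<in>UNIV. (if m = k then ak k (f k) \<bullet> v else 0) - (if m = l then ak l (f l) \<bullet> v else 0))"
    by (rule sum.cong) (auto simp: X_def lk inner_diff_right)
  ultimately have "ak k (f k) \<bullet> v - ak l (f l) \<bullet> v = 0" by (simp add: sum_subtractf)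
  then have "v \<bullet> v = 0" unfolding v_def by (simp add: inner_diff_left)
  then show ?thesis unfolding v_def by simp
qed


lemma adj_lin: "linear (adjoint A)" by (rule adjoint_linear[OF A_lin])

lemma sum_lam_inner: "(\<Sum>k\<in>UNIV. lam k *\<^sub>R f k) = - adjoint A g \<Longrightarrow> (\<Sum>k\<in>UNIV. lam k *\<^sub>R f k) \<bullet> x = - (A x \<bullet> g)"
  using adj[of x g] by (simp add: inner_commute)

lemma opt_primal:
  assumes fe: "feas f g" and opt: "\<forall>f' g'. feas f' g' \<longrightarrow> Dl f g \<le> Dl f' g'"
  shows "\<exists>a. (\<forall>k. ak k (f k) = a) \<and> a \<in> prob_simplex \<and> (\<forall>a'\<in>prob_simplex. Pr a \<le> Pr a')
          \<and> Dl f g = - ereal (Pr a)"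
proof -
  obtain Jg where Jg: "conj_fun J g = ereal Jg" using opt_fin[OF fe opt] by blast
  have fe': "adjoint A g + (\<Sum>m\<in>UNIV. lam m *\<^sub>R f m) = 0" using fe unfolding dual_feasible_def .
  have sumf: "(\<Sum>m\<in>UNIV. lam m *\<^sub>R f m) = - adjoint A g" using fe' by (simp add: eq_neg_iff_add_eq_0 add.commute)
  define a where "a = ak undefined (f undefined)"
  have aall: "\<forall>k. ak k (f k) = a" unfolding a_def using common_grad[OF fe opt] by blast
  have Jgy: "g \<bullet> y - J y \<le> Jg" for y using conj_ge[of g y] Jg by simp
  have Smin2: "Sf f + Jg \<le> Sf f' + c" if "feas f' g'" "conj_fun J g' \<le> ereal c" for f' g' c
  proof -
    have "Dl f g \<le> Dl f' g'" using opt that(1) by blast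
    also have "\<dots> \<le> ereal (Sf f') + ereal c" unfolding Dl_eq using that(2) by (rule add_left_mono)
    finally show ?thesis unfolding Dl_eq Jg by simp
  qed
  have sub: "Jg + A a \<bullet> (h - g) \<le> c" if hc: "conj_fun J h = ereal c" for h c
  proof -
    define \<delta> where "\<delta> = h - g"
    define w where "w = - adjoint A \<delta>"
    define \<phi> where "\<phi> = (\<lambda>t::real. Sf (\<lambda>m. f m + t *\<^sub>R w))"
    have feas_t: "feas (\<lambda>m. f m + t *\<^sub>R w) (g + t *\<^sub>R \<delta>)" for t
    proof -
      have "adjoint A (g + t *\<^sub>R \<delta>) = adjoint A g + t *\<^sub>R adjoint A \<delta>"
        using adj_lin by (simp add: linear_add linear_scale)
      moreover have "(\<Sum>m\<in>UNIV. lam m *\<^sub>R (f m + t *\<^sub>R w)) = (\<Sum>m\<in>UNIV. lam m *\<^sub>R f m) + t *\<^sub>R w"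
      proof -
        have "(\<Sum>m\<in>UNIV. lam m * t) = t" using lam_sum by (simp add: sum_distrib_right[symmetric])
        then show ?thesis by (simp add: scaleR_add_right sum.distrib scaleR_sum_left[symmetric])
      qed
      ultimately show ?thesis unfolding dual_feasible_def using fe' by (simp add: w_def algebra_simps)
    qed
    have conj_t: "conj_fun J (g + t *\<^sub>R \<delta>) \<le> ereal ((1 - t) * Jg + t * c)" if "0 \<le> t" "t \<le> 1" for t
    proof (rule conj_le)
      fix y
      have hy: "h \<bullet> y - J y \<le> c" using conj_ge[of h y] hc by simp
      have "(g + t *\<^sub>R \<delta>) \<bullet> y - J y = (1 - t) * (g \<bullet> y - J y) + t * (h \<bullet> y - J y)"
        by (simp add: \<delta>_def inner_add_left inner_diff_left algebra_simps)
      also have "\<dots> \<le> (1 - t) * Jg + t * c"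
        using Jgy[of y] hy that by (intro add_mono mult_left_mono) auto
      finally show "(g + t *\<^sub>R \<delta>) \<bullet> y - J y \<le> (1 - t) * Jg + t * c" .
    qed
    have ineq: "- (c - Jg) \<le> (\<phi> t - \<phi> 0) / t" if "0 < t" "t < 1" for t
    proof -
      have "Sf f + Jg \<le> \<phi> t + ((1 - t) * Jg + t * c)"
        using Smin2[OF feas_t conj_t] that unfolding \<phi>_def by simp
      moreover have "\<phi> 0 = Sf f" unfolding \<phi>_def by simp
      ultimately have "- (c - Jg) * t \<le> \<phi> t - \<phi> 0" by (simp add: algebra_simps)
      then show ?thesis using that by (simp add: pos_le_divide_eq)
    qed
    have "(\<phi> has_field_derivative (\<Sum>m\<in>UNIV. lam m * (ak m (f m) \<bullet> w))) (at 0)"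
      unfolding \<phi>_def by (intro DERIV_sum DERIV_cmult Phi_line[OF eps_pos])
    moreover have "(\<Sum>m\<in>UNIV. lam m * (ak m (f m) \<bullet> w)) = a \<bullet> w"
      using aall lam_sum by (simp add: sum_distrib_right[symmetric])
    ultimately have "(\<phi> has_field_derivative (a \<bullet> w)) (at 0 within {0<..})"
      by (simp add: has_field_derivative_at_within)
    then have lim: "((\<lambda>t. (\<phi> t - \<phi> 0) / t) \<longlongrightarrow> a \<bullet> w) (at_right 0)"
      unfolding has_field_derivative_iff by simp
    have ev: "\<forall>\<^sub>F t in at_right 0. - (c - Jg) \<le> (\<phi> t - \<phi> 0) / t"
      using eventually_at_right_real[OF zero_less_one] by eventually_elim (use ineq in auto)
    have "- (c - Jg) \<le> a \<bullet> w" by (rule tendsto_lowerbound[OF lim ev]) simp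
    moreover have "a \<bullet> w = - (A a \<bullet> \<delta>)" unfolding w_def using adj[of a \<delta>] by simp
    ultimately show ?thesis unfolding \<delta>_def by simp
  qed
  define y0 where "y0 = A a"
  obtain g1 where g1: "\<forall>y. J y0 + g1 \<bullet> (y - y0) \<le> J y" using subgrad_exists[OF J_convex] by blast
  have "conj_fun J g1 \<le> ereal (g1 \<bullet> y0 - J y0)"
    by (rule conj_le) (use g1 in \<open>auto simp: inner_diff_right algebra_simps\<close>)
  moreover have "ereal (g1 \<bullet> y0 - J y0) \<le> conj_fun J g1" by (rule conj_ge)
  ultimately have "conj_fun J g1 = ereal (g1 \<bullet> y0 - J y0)" by (rule antisym)
  from sub[OF this] have "Jg \<le> g \<bullet> y0 - J y0" unfolding y0_def
    by (simp add: inner_diff_right inner_commute)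
  with Jgy[of y0] have Jgv: "Jg = g \<bullet> y0 - J y0" by simp
  have Jsub: "J y0 + g \<bullet> (y - y0) \<le> J y" for y using Jgy[of y] Jgv by (simp add: inner_diff_right)
  have aS: "a \<in> prob_simplex" using ast_simplex b_simplex aall by metis
  have Fa: "Fk k a = f k \<bullet> a - Ph k (f k)" for k
    using Fb_ast[OF eps_pos b_simplex[rule_format, of k], of C "f k"] aall by simp
  have Fa': "f k \<bullet> a' - Ph k (f k) \<le> Fk k a'" if "a' \<in> prob_simplex" for k a'
    using Fb_lower[OF eps_pos that b_simplex[rule_format, of k]] by simp
  have primal_opt: "Pr a \<le> Pr a'" if a': "a' \<in> prob_simplex" for a'
  proof -
    have "(\<Sum>k\<in>UNIV. lam k * (f k \<bullet> (a' - a))) \<le> (\<Sum>k\<in>UNIV. lam k * (Fk k a' - Fk k a))"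
    proof (rule sum_mono)
      fix k
      have "f k \<bullet> (a' - a) \<le> Fk k a' - Fk k a" using Fa[of k] Fa'[OF a', of k] by (simp add: inner_diff_right)
      then show "lam k * (f k \<bullet> (a' - a)) \<le> lam k * (Fk k a' - Fk k a)"
        using lam_pos by (simp add: less_imp_le mult_left_mono)
    qed
    moreover have "(\<Sum>k\<in>UNIV. lam k * (f k \<bullet> (a' - a))) = - (A (a' - a) \<bullet> g)"
      using sum_lam_inner[OF sumf, of "a' - a"] by (simp add: inner_sum_left)
    moreover have "A (a' - a) = A a' - y0" unfolding y0_def using A_lin by (simp add: linear_diff)
    moreover have "J y0 + g \<bullet> (A a' - y0) \<le> J (A a')" by (rule Jsub)
    ultimately show ?thesis unfolding primal_obj_def y0_def
      by (simp add: sum_subtractf right_diff_distrib inner_commute)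
  qed
  have "Sf f = (\<Sum>k\<in>UNIV. lam k * (f k \<bullet> a - Fk k a))" using Fa by simp
  also have "\<dots> = - (A a \<bullet> g) - (\<Sum>k\<in>UNIV. lam k * Fk k a)"
    using sum_lam_inner[OF sumf, of a] by (simp add: inner_sum_left sum_subtractf right_diff_distrib)
  finally have "Dl f g = ereal (- (A a \<bullet> g) - (\<Sum>k\<in>UNIV. lam k * Fk k a) + (g \<bullet> y0 - J y0))"
    unfolding Dl_eq Jg Jgv by simp
  also have "\<dots> = - ereal (Pr a)" unfolding primal_obj_def y0_def by (simp add: inner_commute)
  finally show ?thesis using aall aS primal_opt by blast
qed


lemma normalize:
  assumes fe: "feas f g"
  shows "\<exists>f'. feas f' g \<and> Dl f' g = Dl f g \<and> (\<forall>k. f' k \<bullet> unif = - (A unif \<bullet> g))"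
proof -
  have fe': "adjoint A g + (\<Sum>m\<in>UNIV. lam m *\<^sub>R f m) = 0" using fe unfolding dual_feasible_def .
  have sumf: "(\<Sum>m\<in>UNIV. lam m *\<^sub>R f m) = - adjoint A g" using fe' by (simp add: eq_neg_iff_add_eq_0 add.commute)
  define c where "c = - (A unif \<bullet> g)"
  define f' where "f' = (\<lambda>k. f k + (c - f k \<bullet> unif) *\<^sub>R onev)"
  have sc: "(\<Sum>k\<in>UNIV. lam k * (c - f k \<bullet> unif)) = 0"
  proof -
    have "(\<Sum>k\<in>UNIV. lam k * (c - f k \<bullet> unif)) = c * (\<Sum>k\<in>UNIV. lam k) - (\<Sum>k\<in>UNIV. lam k *\<^sub>R f k) \<bullet> unif"
      by (simp add: right_diff_distrib sum_subtractf sum_distrib_left inner_sum_left mult.commute)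
    then show ?thesis using sum_lam_inner[OF sumf, of unif] lam_sum by (simp add: c_def)
  qed
  have "feas f' g"
  proof -
    have "(\<Sum>k\<in>UNIV. lam k *\<^sub>R f' k) = (\<Sum>k\<in>UNIV. lam k *\<^sub>R f k) + (\<Sum>k\<in>UNIV. lam k * (c - f k \<bullet> unif)) *\<^sub>R onev"
      unfolding f'_def by (simp add: scaleR_add_right sum.distrib scaleR_sum_left)
    then show ?thesis unfolding dual_feasible_def using fe' sc by simp
  qed
  moreover have "Dl f' g = Dl f g"
  proof -
    have "Sf f' = (\<Sum>k\<in>UNIV. lam k * (Ph k (f k) + (c - f k \<bullet> unif)))"
      unfolding f'_def onev_chi[symmetric]
      by (rule sum.cong[OF refl]) (simp add: Phi_shift[OF eps_pos b_simplex[rule_format]])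
    also have "\<dots> = Sf f" using sc by (simp add: distrib_left sum.distrib)
    finally show ?thesis unfolding Dl_eq by simp
  qed
  moreover have "\<forall>k. f' k \<bullet> unif = - (A unif \<bullet> g)"
  proof -
    have ou: "(onev::real^'n) \<bullet> unif = 1" using onev_unif[of 1] by simp
    show ?thesis unfolding f'_def using ou by (simp add: inner_add_left c_def)
  qed
  ultimately show ?thesis by blast
qed


lemma conj_lower:
  assumes M: "\<forall>y\<in>cball c 1. J y \<le> M"
  shows "ereal (g \<bullet> c + norm g - M) \<le> conj_fun J g"
proof (cases "g = 0")
  case True
  have h1: "ereal (g \<bullet> c - J c) \<le> conj_fun J g" by (rule conj_ge)
  have "J c \<le> M" using M by simp
  then have h2: "ereal (g \<bullet> c + norm g - M) \<le> ereal (g \<bullet> c - J c)" using True by simp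
  show ?thesis by (rule order_trans[OF h2 h1])
next
  case False
  define y where "y = c + (1 / norm g) *\<^sub>R g"
  have "y \<in> cball c 1" unfolding y_def using False by (simp add: dist_norm)
  then have Jy: "J y \<le> M" using M by blast
  have "g \<bullet> y = g \<bullet> c + norm g" unfolding y_def using False
    by (simp add: inner_add_right power2_norm_eq_inner[symmetric] power2_eq_square)
  then have "g \<bullet> c + norm g - M \<le> g \<bullet> y - J y" using Jy by simp
  then show ?thesis using conj_ge[of g y] by (meson ereal_less_eq(3) order_trans)
qed

lemma lam_min: "\<exists>\<Lambda>>0. \<forall>k. \<Lambda> \<le> lam k"
proof -
  have "Min (range lam) \<in> range lam" by (rule Min_in) auto
  then have "Min (range lam) > 0" using lam_pos by auto
  moreover have "\<forall>k. Min (range lam) \<le> lam k" by simp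
  ultimately show ?thesis by blast
qed

lemma bounds:
  "\<exists>R. \<forall>f g. feas f g \<and> (\<forall>k. f k \<bullet> unif = - (A unif \<bullet> g)) \<and> Dl f g \<le> ereal D0
     \<longrightarrow> norm g \<le> R \<and> (\<forall>k i. \<bar>f k $ i\<bar> \<le> R)"
proof -
  obtain M where M: "\<forall>y\<in>cball (A unif) 1. J y \<le> M" using convex_bounded_ball[OF J_convex] by blast
  obtain \<Lambda> where \<Lambda>: "\<Lambda> > 0" "\<forall>k. \<Lambda> \<le> lam k" using lam_min by blast
  define B where "B = (\<Sum>k\<in>UNIV. \<bar>Fk k unif\<bar>)"
  define E where "E = (\<Sum>k\<in>UNIV. \<Sum>i\<in>UNIV. \<bar>Fk k (axis i 1)\<bar>)"
  define K where "K = \<bar>D0\<bar> + \<bar>M\<bar> + B"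
  define R2 where "R2 = K / \<Lambda> + E"
  define R where "R = K + norm (A unif) * K + (real CARD('n) + 1) * R2"
  have B0: "B \<ge> 0" unfolding B_def by (simp add: sum_nonneg)
  have E0: "E \<ge> 0" unfolding E_def by (simp add: sum_nonneg)
  have K0: "K \<ge> 0" unfolding K_def using B0 by simp
  have R20: "R2 \<ge> 0" unfolding R2_def using K0 E0 \<Lambda> by simp
  have FuB: "Fk k unif \<le> B" for k
  proof -
    have "\<bar>Fk k unif\<bar> \<le> B" unfolding B_def by (rule member_le_sum) auto
    then show ?thesis by simp
  qed
  have FeE: "Fk k (axis i 1) \<le> E" for k i
  proof -
    have "\<bar>Fk k (axis i 1)\<bar> \<le> (\<Sum>i\<in>UNIV. \<bar>Fk k (axis i 1)\<bar>)" by (rule member_le_sum) auto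
    also have "\<dots> \<le> E" unfolding E_def by (rule member_le_sum) (auto simp: sum_nonneg)
    finally show ?thesis by simp
  qed
  show ?thesis
  proof (intro exI allI impI)
    fix f g
    assume asm: "feas f g \<and> (\<forall>k. f k \<bullet> unif = - (A unif \<bullet> g)) \<and> Dl f g \<le> ereal D0"
    then have fe: "feas f g" and nf: "\<forall>k. f k \<bullet> unif = - (A unif \<bullet> g)" and D: "Dl f g \<le> ereal D0" by auto
    have fe': "adjoint A g + (\<Sum>m\<in>UNIV. lam m *\<^sub>R f m) = 0" using fe unfolding dual_feasible_def .
    have sumf: "(\<Sum>m\<in>UNIV. lam m *\<^sub>R f m) = - adjoint A g" using fe' by (simp add: eq_neg_iff_add_eq_0 add.commute)
    define T where "T = (\<lambda>k. Ph k (f k) - f k \<bullet> unif)"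
    have TB: "- B \<le> T k" for k
      using Fb_lower[OF eps_pos unif_simplex b_simplex[rule_format, of k], of "f k" C] FuB[of k]
      unfolding T_def by simp
    have Te: "f k $ i - f k \<bullet> unif \<le> T k + Fk k (axis i 1)" for k i
      using Fb_lower[OF eps_pos axis_simplex[of i] b_simplex[rule_format, of k], of "f k" C]
      unfolding T_def inner_axis1 by simp
    have gAu: "g \<bullet> A unif = - (\<Sum>k\<in>UNIV. lam k * (f k \<bullet> unif))"
      using sum_lam_inner[OF sumf, of unif] by (simp add: inner_sum_left inner_commute inner_sum_right)
    have "ereal (Sf f + (g \<bullet> A unif + norm g - M)) \<le> Dl f g"
    proof -
      have "ereal (Sf f + (g \<bullet> A unif + norm g - M)) = ereal (Sf f) + ereal (g \<bullet> A unif + norm g - M)" by simp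
      also have "\<dots> \<le> ereal (Sf f) + conj_fun J g" by (rule add_left_mono[OF conj_lower[OF M]])
      finally show ?thesis unfolding Dl_eq .
    qed
    with D have "ereal (Sf f + (g \<bullet> A unif + norm g - M)) \<le> ereal D0" by (rule order_trans[rotated])
    then have "Sf f + (g \<bullet> A unif + norm g - M) \<le> D0" by simp
    moreover have "Sf f + g \<bullet> A unif = (\<Sum>k\<in>UNIV. lam k * T k)"
      unfolding gAu T_def by (simp add: right_diff_distrib sum_subtractf)
    ultimately have main: "(\<Sum>k\<in>UNIV. lam k * T k) + norm g \<le> D0 + M" by simp
    have sTB: "(\<Sum>k\<in>UNIV. lam k * (T k + B)) = (\<Sum>k\<in>UNIV. lam k * T k) + B"
      using lam_sum by (simp add: distrib_left sum.distrib sum_distrib_right[symmetric])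
    have TB0: "0 \<le> lam k * (T k + B)" for k using TB[of k] lam_pos by (simp add: less_imp_le)
    have "0 \<le> (\<Sum>k\<in>UNIV. lam k * (T k + B))" using TB0 by (simp add: sum_nonneg)
    then have ng: "norm g \<le> K" using main sTB unfolding K_def by linarith
    have Tk: "T k + B \<le> K / \<Lambda>" for k
    proof -
      have "lam k * (T k + B) \<le> (\<Sum>k\<in>UNIV. lam k * (T k + B))"
        by (rule member_le_sum) (use TB0 in auto)
      moreover have "norm g \<ge> 0" by simp
      ultimately have l1: "lam k * (T k + B) \<le> K" using main sTB unfolding K_def by linarith
      have lk: "lam k > 0" using lam_pos by simp
      have "T k + B \<le> K / lam k" using l1 lk by (simp add: pos_le_divide_eq mult.commute)
      also have "\<dots> \<le> K / \<Lambda>" using K0 \<Lambda> lk by (intro divide_left_mono) auto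
      finally show ?thesis .
    qed
    define \<mu> where "\<mu> = - (A unif \<bullet> g)"
    have up: "f k $ i - \<mu> \<le> R2" for k i
      using Te[of k i] Tk[of k] FeE[of k i] B0 nf unfolding R2_def \<mu>_def by fastforce
    have ncard: "real CARD('n) > 0" by simp
    have lo: "- (real CARD('n) * R2) \<le> f k $ i - \<mu>" for k i
    proof -
      have "(\<Sum>j\<in>UNIV. f k $ j) = real CARD('n) * \<mu>"
        using nf[rule_format, of k] unfolding inner_unif \<mu>_def using ncard by (simp add: field_simps)
      then have s0: "(\<Sum>j\<in>UNIV. f k $ j - \<mu>) = 0" by (simp add: sum_subtractf)
      have "(\<Sum>j\<in>UNIV. f k $ j - \<mu>) = (f k $ i - \<mu>) + (\<Sum>j\<in>UNIV - {i}. f k $ j - \<mu>)"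
        by (simp add: sum.remove)
      moreover have "(\<Sum>j\<in>UNIV - {i}. f k $ j - \<mu>) \<le> real (card (UNIV - {i} :: 'n set)) * R2"
        by (rule sum_bounded_above) (rule up)
      moreover have "real (card (UNIV - {i} :: 'n set)) * R2 \<le> real CARD('n) * R2"
        using R20 by (intro mult_right_mono) (auto simp: card_mono)
      ultimately show ?thesis using s0 by linarith
    qed
    have mu: "\<bar>\<mu>\<bar> \<le> norm (A unif) * K"
    proof -
      have "\<bar>\<mu>\<bar> \<le> norm (A unif) * norm g" unfolding \<mu>_def using Cauchy_Schwarz_ineq2 by simp
      also have "\<dots> \<le> norm (A unif) * K" using ng by (simp add: mult_left_mono)
      finally show ?thesis .
    qed
    show "norm g \<le> R \<and> (\<forall>k i. \<bar>f k $ i\<bar> \<le> R)"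
    proof
      show "norm g \<le> R" using ng K0 R20 unfolding R_def
        by (smt (verit) mult_nonneg_nonneg norm_ge_zero of_nat_0_le_iff)
      show "\<forall>k i. \<bar>f k $ i\<bar> \<le> R"
      proof (intro allI)
        fix k i
        have "\<bar>f k $ i\<bar> \<le> \<bar>\<mu>\<bar> + real CARD('n) * R2 + R2" by (rule abs_aux[OF up[of k i] lo[of k i] R20]) (use R20 in simp)
        also have "\<dots> \<le> R" using mu K0 unfolding R_def by (simp add: algebra_simps)
        finally show "\<bar>f k $ i\<bar> \<le> R" .
      qed
    qed
  qed
qed


lemma dual_attained: "\<exists>f g. feas f g \<and> (\<forall>f' g'. feas f' g' \<longrightarrow> Dl f g \<le> Dl f' g')"
proof -
  define FS where "FS = {(f, g). feas f g}"
  define m where "m = (INF fg\<in>FS. Dl (fst fg) (snd fg))"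
  have mle: "m \<le> Dl f g" if "feas f g" for f g
    unfolding m_def by (rule INF_lower2[of "(f, g)"]) (use that in \<open>auto simp: FS_def\<close>)
  have "m < \<infinity>" using fin_point mle by (meson le_less_trans)
  moreover have "- ereal (Pr unif) \<le> m"
    unfolding m_def FS_def by (rule INF_greatest) (auto intro: weak[OF _ unif_simplex, simplified])
  ultimately obtain mr where mr: "m = ereal mr" by (cases m) auto
  have "\<forall>n::nat. \<exists>fg. feas (fst fg) (snd fg) \<and> (\<forall>k. fst fg k \<bullet> unif = - (A unif \<bullet> snd fg))
           \<and> Dl (fst fg) (snd fg) < ereal (mr + inverse (real (Suc n)))"
  proof
    fix n :: nat
    have "m < ereal (mr + inverse (real (Suc n)))" using mr by simp
    then obtain fg where fg: "fg \<in> FS" "Dl (fst fg) (snd fg) < ereal (mr + inverse (real (Suc n)))"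
      unfolding m_def INF_less_iff by blast
    then have "feas (fst fg) (snd fg)" unfolding FS_def by auto
    from normalize[OF this] obtain f' where "feas f' (snd fg)" "Dl f' (snd fg) = Dl (fst fg) (snd fg)"
      "\<forall>k. f' k \<bullet> unif = - (A unif \<bullet> snd fg)" by blast
    then show "\<exists>fg. feas (fst fg) (snd fg) \<and> (\<forall>k. fst fg k \<bullet> unif = - (A unif \<bullet> snd fg))
           \<and> Dl (fst fg) (snd fg) < ereal (mr + inverse (real (Suc n)))"
      using fg(2) by (intro exI[of _ "(f', snd fg)"]) auto
  qed
  then obtain seq where seq: "\<And>n. feas (fst (seq n)) (snd (seq n))"
    "\<And>n. \<forall>k. fst (seq n) k \<bullet> unif = - (A unif \<bullet> snd (seq n))"
    "\<And>n. Dl (fst (seq n)) (snd (seq n)) < ereal (mr + inverse (real (Suc n)))"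
    by metis
  define F where "F = (\<lambda>n. fst (seq n))"
  define G where "G = (\<lambda>n. snd (seq n))"
  obtain R where R: "\<forall>f g. feas f g \<and> (\<forall>k. f k \<bullet> unif = - (A unif \<bullet> g)) \<and> Dl f g \<le> ereal (mr + 1)
     \<longrightarrow> norm g \<le> R \<and> (\<forall>k i. \<bar>f k $ i\<bar> \<le> R)" using bounds by blast
  have bd: "norm (G n) \<le> R \<and> (\<forall>k i. \<bar>F n k $ i\<bar> \<le> R)" for n
  proof -
    have "inverse (real (Suc n)) \<le> 1" by (simp add: inverse_le_1_iff)
    then have "Dl (F n) (G n) \<le> ereal (mr + 1)" using seq(3)[of n] unfolding F_def G_def
      by (meson add_left_mono ereal_less_eq(3) less_imp_le order_trans)
    then show ?thesis using R seq(1,2)[of n] unfolding F_def G_def by blast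
  qed
  define x where "x = (\<lambda>n. ((\<chi> k. F n k) :: real^'n^'k, G n))"
  have "bounded (range x)"
  proof -
    have b1: "bounded (range (\<lambda>n. (\<chi> k. F n k) :: real^'n^'k))"
    proof -
      have "norm ((\<chi> k. F n k) :: real^'n^'k) \<le> real CARD('k) * (real CARD('n) * R)" for n
      proof -
        have "norm ((\<chi> k. F n k) :: real^'n^'k) \<le> (\<Sum>k\<in>UNIV. norm (F n k))"
          by (simp add: norm_vec_def L2_set_le_sum)
        also have "\<dots> \<le> (\<Sum>k\<in>(UNIV::'k set). real CARD('n) * R)"
        proof (rule sum_mono)
          fix k
          have "norm (F n k) \<le> (\<Sum>i\<in>UNIV. \<bar>F n k $ i\<bar>)" by (rule norm_le_l1_cart)
          also have "\<dots> \<le> (\<Sum>i\<in>(UNIV::'n set). R)" using bd[of n] by (intro sum_mono) auto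
          finally show "norm (F n k) \<le> real CARD('n) * R" by simp
        qed
        finally show ?thesis by simp
      qed
      then show ?thesis unfolding bounded_iff by blast
    qed
    have b2: "bounded (range G)" unfolding bounded_iff using bd by blast
    have "range x \<subseteq> range (\<lambda>n. (\<chi> k. F n k) :: real^'n^'k) \<times> range G" unfolding x_def by auto
    then show ?thesis using bounded_Times[OF b1 b2] bounded_subset by blast
  qed
  then obtain l r where r: "strict_mono r" and lim: "((x \<circ> r) \<longlongrightarrow> l) sequentially"
    using bounded_imp_convergent_subsequence by blast
  define fs where "fs = (\<lambda>k. fst l $ k)"
  define gs where "gs = snd l"
  have limF: "((\<lambda>n. F (r n) k) \<longlongrightarrow> fs k) sequentially" for k
  proof -
    have "((\<lambda>n. fst ((x \<circ> r) n) $ k) \<longlongrightarrow> fst l $ k) sequentially"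
      by (intro tendsto_vec_nth tendsto_fst lim)
    then show ?thesis unfolding x_def fs_def by simp
  qed
  have limG: "((\<lambda>n. G (r n)) \<longlongrightarrow> gs) sequentially"
  proof -
    have "((\<lambda>n. snd ((x \<circ> r) n)) \<longlongrightarrow> snd l) sequentially"
      by (intro tendsto_snd lim)
    then show ?thesis unfolding x_def gs_def by simp
  qed
  have blA: "bounded_linear (adjoint A)" using adj_lin linear_conv_bounded_linear by blast
  have fes: "feas fs gs"
  proof -
    have t1: "((\<lambda>n. adjoint A (G (r n))) \<longlongrightarrow> adjoint A gs) sequentially"
      by (rule bounded_linear.tendsto[OF blA limG])
    have t2: "((\<lambda>n. \<Sum>k\<in>UNIV. lam k *\<^sub>R F (r n) k) \<longlongrightarrow> (\<Sum>k\<in>UNIV. lam k *\<^sub>R fs k)) sequentially"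
      by (rule tendsto_sum) (rule tendsto_scaleR[OF tendsto_const limF])
    have t3: "((\<lambda>n. adjoint A (G (r n)) + (\<Sum>k\<in>UNIV. lam k *\<^sub>R F (r n) k)) \<longlongrightarrow>
        adjoint A gs + (\<Sum>k\<in>UNIV. lam k *\<^sub>R fs k)) sequentially"
      by (rule tendsto_add[OF t1 t2])
    have e0: "(\<lambda>n. adjoint A (G (r n)) + (\<Sum>k\<in>UNIV. lam k *\<^sub>R F (r n) k)) = (\<lambda>n. 0)"
      using seq(1) unfolding F_def G_def dual_feasible_def by simp
    have "((\<lambda>n. 0) \<longlongrightarrow> adjoint A gs + (\<Sum>k\<in>UNIV. lam k *\<^sub>R fs k)) sequentially"
      using t3 unfolding e0 .
    then have "adjoint A gs + (\<Sum>k\<in>UNIV. lam k *\<^sub>R fs k) = 0"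
      by (rule LIMSEQ_unique[OF _ tendsto_const])
    then show ?thesis unfolding dual_feasible_def .
  qed
  have limS: "((\<lambda>n. Sf (F (r n))) \<longlongrightarrow> Sf fs) sequentially"
  proof (intro tendsto_sum tendsto_mult_left)
    fix k
    have "isCont (Ph k) (fs k)" using has_derivative_continuous[OF Phi_deriv[OF eps_pos]] by blast
    then show "((\<lambda>n. Ph k (F (r n) k)) \<longlongrightarrow> Ph k (fs k)) sequentially"
      by (rule isCont_tendsto_compose[OF _ limF])
  qed
  have cn: "G n \<bullet> y - J y \<le> mr + inverse (real (Suc n)) - Sf (F n)" for n y
  proof -
    have D: "ereal (Sf (F n)) + conj_fun J (G n) < ereal (mr + inverse (real (Suc n)))"
      using seq(3)[of n] unfolding Dl_eq F_def G_def .
    then have "conj_fun J (G n) \<noteq> \<infinity>" by auto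
    then obtain c where c: "conj_fun J (G n) = ereal c" using conj_real by blast
    have "G n \<bullet> y - J y \<le> c" using conj_ge[of "G n" y] c by simp
    moreover have "Sf (F n) + c < mr + inverse (real (Suc n))" using D c by simp
    ultimately show ?thesis by simp
  qed
  have "conj_fun J gs \<le> ereal (mr - Sf fs)"
  proof (rule conj_le)
    fix y
    have l1: "((\<lambda>n. G (r n) \<bullet> y - J y) \<longlongrightarrow> gs \<bullet> y - J y) sequentially"
      by (intro tendsto_diff tendsto_inner limG tendsto_const)
    have inv: "((\<lambda>n. inverse (real (Suc (r n)))) \<longlongrightarrow> 0) sequentially"
      using LIMSEQ_subseq_LIMSEQ[OF LIMSEQ_inverse_real_of_nat r] by (simp add: o_def)
    have l2: "((\<lambda>n. mr + inverse (real (Suc (r n))) - Sf (F (r n))) \<longlongrightarrow> mr + 0 - Sf fs) sequentially"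
      by (intro tendsto_diff tendsto_add tendsto_const inv limS)
    have "gs \<bullet> y - J y \<le> mr + 0 - Sf fs"
      by (rule tendsto_le[OF trivial_limit_sequentially l2 l1]) (use cn in simp)
    then show "gs \<bullet> y - J y \<le> mr - Sf fs" by simp
  qed
  then have "Dl fs gs \<le> ereal (Sf fs) + ereal (mr - Sf fs)" unfolding Dl_eq by (rule add_left_mono)
  also have "\<dots> = m" using mr by simp
  finally have "\<forall>f' g'. feas f' g' \<longrightarrow> Dl fs gs \<le> Dl f' g'" using mle by (meson order_trans)
  then show ?thesis using fes by blast
qed

end

theorem mainTheorem7:
  fixes eps :: real and C :: "real^'n^'n" and b :: "'k::finite \<Rightarrow> real^'n"
    and lam :: "'k \<Rightarrow> real" and A :: "real^'n \<Rightarrow> real^'p" and J :: "real^'p \<Rightarrow> real"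
  assumes eps_pos: "eps > 0"
    and b_simplex: "\<forall>k. b k \<in> prob_simplex"
    and lam_pos: "\<forall>k. lam k > 0"
    and lam_sum: "(\<Sum>k\<in>UNIV. lam k) = 1"
    and A_lin: "linear A"
    and J_convex: "convex_on UNIV J"
  shows "(\<exists>a0\<in>prob_simplex. \<forall>a\<in>prob_simplex. primal_obj eps C b lam A J a0 \<le> primal_obj eps C b lam A J a)
       \<and> ereal (Inf (primal_obj eps C b lam A J ` prob_simplex))
           = - (INF fg\<in>{(f, g). dual_feasible lam A f g}. dual_obj eps C b lam J (fst fg) (snd fg))
       \<and> (\<forall>f g. dual_feasible lam A f g
              \<and> (\<forall>f' g'. dual_feasible lam A f' g' \<longrightarrow> dual_obj eps C b lam J f g \<le> dual_obj eps C b lam J f' g')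
            \<longrightarrow> (\<exists>a. (\<forall>k. (F_b_conj eps C (b k) has_derivative (\<lambda>h. a \<bullet> h)) (at (f k)))
                    \<and> a \<in> prob_simplex
                    \<and> (\<forall>a'\<in>prob_simplex. primal_obj eps C b lam A J a \<le> primal_obj eps C b lam A J a')))"
proof -
  interpret L: OT eps C b lam A J
    using eps_pos b_simplex lam_pos lam_sum A_lin J_convex by (rule OT.intro)
  obtain fs gs where fes: "dual_feasible lam A fs gs"
    and opt: "\<forall>f' g'. dual_feasible lam A f' g' \<longrightarrow> dual_obj eps C b lam J fs gs \<le> dual_obj eps C b lam J f' g'"
    using L.dual_attained by blast
  obtain a0 where a0: "a0 \<in> prob_simplex"
    and a0min: "\<forall>a'\<in>prob_simplex. primal_obj eps C b lam A J a0 \<le> primal_obj eps C b lam A J a'"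
    and a0D: "dual_obj eps C b lam J fs gs = - ereal (primal_obj eps C b lam A J a0)"
    using L.opt_primal[OF fes opt] by blast
  have P1: "\<exists>a0\<in>prob_simplex. \<forall>a\<in>prob_simplex. primal_obj eps C b lam A J a0 \<le> primal_obj eps C b lam A J a"
    using a0 a0min by blast
  have I1: "Inf (primal_obj eps C b lam A J ` prob_simplex) = primal_obj eps C b lam A J a0"
    by (rule cInf_eq_minimum) (use a0 a0min in auto)
  have I2: "(INF fg\<in>{(f, g). dual_feasible lam A f g}. dual_obj eps C b lam J (fst fg) (snd fg))
      = dual_obj eps C b lam J fs gs"
  proof (rule antisym)
    show "(INF fg\<in>{(f, g). dual_feasible lam A f g}. dual_obj eps C b lam J (fst fg) (snd fg))
      \<le> dual_obj eps C b lam J fs gs"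
      by (rule INF_lower2[of "(fs, gs)"]) (use fes in auto)
    show "dual_obj eps C b lam J fs gs
      \<le> (INF fg\<in>{(f, g). dual_feasible lam A f g}. dual_obj eps C b lam J (fst fg) (snd fg))"
      by (rule INF_greatest) (use opt in auto)
  qed
  have P2: "ereal (Inf (primal_obj eps C b lam A J ` prob_simplex))
           = - (INF fg\<in>{(f, g). dual_feasible lam A f g}. dual_obj eps C b lam J (fst fg) (snd fg))"
    unfolding I1 I2 a0D by simp
  have P3: "\<forall>f g. dual_feasible lam A f g
              \<and> (\<forall>f' g'. dual_feasible lam A f' g' \<longrightarrow> dual_obj eps C b lam J f g \<le> dual_obj eps C b lam J f' g')
            \<longrightarrow> (\<exists>a. (\<forall>k. (F_b_conj eps C (b k) has_derivative (\<lambda>h. a \<bullet> h)) (at (f k)))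
                    \<and> a \<in> prob_simplex
                    \<and> (\<forall>a'\<in>prob_simplex. primal_obj eps C b lam A J a \<le> primal_obj eps C b lam A J a'))"
  proof (intro allI impI)
    fix f g
    assume h: "dual_feasible lam A f g
              \<and> (\<forall>f' g'. dual_feasible lam A f' g' \<longrightarrow> dual_obj eps C b lam J f g \<le> dual_obj eps C b lam J f' g')"
    then obtain a where aa: "\<forall>k. ast eps C (b k) (f k) = a" and aS: "a \<in> prob_simplex"
      and amin: "\<forall>a'\<in>prob_simplex. primal_obj eps C b lam A J a \<le> primal_obj eps C b lam A J a'"
      using L.opt_primal[OF conjunct1[OF h] conjunct2[OF h]] by blast
    have "(F_b_conj eps C (b k) has_derivative (\<lambda>h. a \<bullet> h)) (at (f k))" for k
    proof -
      have "F_b_conj eps C (b k) = Phi eps C (b k)"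
        by (rule ext) (rule Fconj_eq[OF eps_pos b_simplex[rule_format]])
      then show ?thesis using Phi_deriv[OF eps_pos, of C "b k" "f k"] aa by simp
    qed
    then show "\<exists>a. (\<forall>k. (F_b_conj eps C (b k) has_derivative (\<lambda>h. a \<bullet> h)) (at (f k)))
                    \<and> a \<in> prob_simplex
                    \<and> (\<forall>a'\<in>prob_simplex. primal_obj eps C b lam A J a \<le> primal_obj eps C b lam A J a')"
      using aS amin by blast
  qed
  show ?thesis by (rule conjI[OF P1 conjI[OF P2 P3]])
qed

end
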